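(* Let $M=(m_{ij})$ be an $n\times n$ matrix of integers with $n\geq 3$ and $m_{ij}\geq 1$ for all $i,j$. Then $\mathrm{Cat}(M)\neq\emptyset$ if and only if for every $3\times 3$ submatrix $N$ of $M$ one has $\mathrm{Cat}(N)\neq\emptyset$.
   Context: For an $n\times n$ matrix $M=(m_{ij})$ with entries in the natural numbers, $\mathrm{Cat}(M)$ denotes the collection of categories $A$ with exactly $n$ distinct objects $x_1,\dots,x_n$ such that $|A(x_i,x_j)|=m_{ij}$ for all $i,j$, where $A(x_i,x_j)$ is the set of morphisms from $x_i$ to $x_j$. A $3\times 3$ submatrix of $M$ means $(m_{st})_{s,t\in S}$ for a $3$-element subset $S\subseteq\{1,\dots,n\}$ (same indices for rows and columns, in increasing order). *)

theory Defs
  imports Main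
begin

text \<open>A (small) category whose objects are the indices 0,...,n-1.
  hom i j is the set of morphisms from object i to object j (morphisms are
  encoded as natural numbers; hom-sets for different pairs are separate),
  idm i is the identity of i, and cmp i j k g f is the composite g o f
  of f : i -> j and g : j -> k.\<close>

definition is_category ::
  "nat \<Rightarrow> (nat \<Rightarrow> nat \<Rightarrow> nat set) \<Rightarrow> (nat \<Rightarrow> nat)
   \<Rightarrow> (nat \<Rightarrow> nat \<Rightarrow> nat \<Rightarrow> nat \<Rightarrow> nat \<Rightarrow> nat) \<Rightarrow> bool" where
  "is_category n hom idm cmp \<longleftrightarrow>
     (\<forall>i<n. idm i \<in> hom i i) \<and>
     (\<forall>i<n. \<forall>j<n. \<forall>k<n. \<forall>f\<in>hom i j. \<forall>g\<in>hom j k. cmp i j k g f \<in> hom i k) \<and>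
     (\<forall>i<n. \<forall>j<n. \<forall>k<n. \<forall>l<n. \<forall>f\<in>hom i j. \<forall>g\<in>hom j k. \<forall>h\<in>hom k l.
        cmp i k l h (cmp i j k g f) = cmp i j l (cmp j k l h g) f) \<and>
     (\<forall>i<n. \<forall>j<n. \<forall>f\<in>hom i j. cmp i j j (idm j) f = f \<and> cmp i i j f (idm i) = f)"

definition Cat_nonempty :: "nat \<Rightarrow> (nat \<Rightarrow> nat \<Rightarrow> nat) \<Rightarrow> bool" where
  "Cat_nonempty n M \<longleftrightarrow>
     (\<exists>hom idm cmp. is_category n hom idm cmp \<and>
        (\<forall>i<n. \<forall>j<n. finite (hom i j) \<and> card (hom i j) = M i j))"

end

theory Submission
  imports Defs "HOL-Library.Countable"
begin


datatype mor = Id | Pr nat nat | Xm nat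
instance mor :: countable by countable_datatype

lemma card_le_linv:
  "finite B \<Longrightarrow> (\<And>x. x\<in>A \<Longrightarrow> F x \<in> B) \<Longrightarrow> (\<And>x. x\<in>A \<Longrightarrow> G (F x) = x) \<Longrightarrow> card A \<le> card B"
  by (metis card_inj_on_le image_subsetI inj_on_inverseI)

lemma transfer:
  fixes hom :: "nat \<Rightarrow> nat \<Rightarrow> 'a::countable set"
  assumes "\<forall>i<n. idm i \<in> hom i i"
    and "\<forall>i<n. \<forall>j<n. \<forall>k<n. \<forall>f\<in>hom i j. \<forall>g\<in>hom j k. cmp i j k g f \<in> hom i k"
    and "\<forall>i<n. \<forall>j<n. \<forall>k<n. \<forall>l<n. \<forall>f\<in>hom i j. \<forall>g\<in>hom j k. \<forall>h\<in>hom k l.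
        cmp i k l h (cmp i j k g f) = cmp i j l (cmp j k l h g) f"
    and "\<forall>i<n. \<forall>j<n. \<forall>f\<in>hom i j. cmp i j j (idm j) f = f \<and> cmp i i j f (idm i) = f"
    and "\<forall>i<n. \<forall>j<n. finite (hom i j) \<and> card (hom i j) = M i j"
  shows "Cat_nonempty n M"
  unfolding Cat_nonempty_def
proof (intro exI conjI)
  show "is_category n (\<lambda>i j. to_nat ` hom i j) (\<lambda>i. to_nat (idm i))
     (\<lambda>i j k g f. to_nat (cmp i j k (from_nat g) (from_nat f)))"
    using assms(1-4) unfolding is_category_def by (auto simp: image_iff)
  show "\<forall>i<n. \<forall>j<n. finite (to_nat ` hom i j) \<and> card (to_nat ` hom i j) = M i j"
    using assms(5) by (simp add: card_image inj_on_def)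
qed

definition fp :: "mor \<Rightarrow> nat" where "fp x = (case x of Pr s r \<Rightarrow> s | _ \<Rightarrow> 0)"
definition sp :: "mor \<Rightarrow> nat" where "sp x = (case x of Pr s r \<Rightarrow> r | _ \<Rightarrow> 0)"

lemma construction:
  fixes M :: "nat \<Rightarrow> nat \<Rightarrow> nat" and a b :: "nat \<Rightarrow> nat"
  assumes ab: "\<forall>k<n. a k \<ge> 1 \<and> b k \<ge> 1"
    and T1: "\<forall>j<n. M j j = 1 \<longrightarrow> a j = 1 \<and> b j = 1"
    and T2: "\<forall>j<n. \<forall>k<n. M j j = 1 \<or> M k k = 1 \<longrightarrow> M j k = a k * b j"
    and U: "\<forall>j<n. \<forall>k<n. M j j \<noteq> 1 \<and> M k k \<noteq> 1 \<longrightarrow> a k * b j + (if j = k then 1 else 0) \<le> M j k"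
  shows "Cat_nonempty n M"
proof -
  define c where "c j k = (if M j j = 1 \<or> M k k = 1 then 0 else M j k - a k * b j - (if j = k then 1 else 0))" for j k
  define hom where "hom j k = (if j = k \<and> M j j \<noteq> 1 then {Id} else {}) \<union>
      (\<lambda>(s,r). Pr s r) ` ({..<a k} \<times> {..<b j}) \<union> Xm ` {..< c j k}" for j k
  define idm where "idm j = (if M j j \<noteq> 1 then Id else Pr 0 0)" for j
  define cmp where "cmp (i::nat) (j::nat) (k::nat) g f = (if f = Id then g else if g = Id then f else Pr (fp g) (sp f))" for i j k g f
  show ?thesis
  proof (rule transfer[of n idm hom cmp])
    show "\<forall>i<n. idm i \<in> hom i i" using T1 by (auto simp: idm_def hom_def)
    have prm: "Pr s r \<in> hom i k \<longleftrightarrow> s < a k \<and> r < b i" for s r i k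
      by (auto simp: hom_def)
    have idm_hom: "Id \<in> hom i j \<Longrightarrow> i = j" for i j by (auto simp: hom_def split: if_splits)
    have spb: "f \<in> hom i j \<Longrightarrow> f \<noteq> Id \<Longrightarrow> i < n \<Longrightarrow> sp f < b i" for f i j
      using ab by (auto simp: hom_def sp_def split: if_splits)
    have fpb: "g \<in> hom j k \<Longrightarrow> g \<noteq> Id \<Longrightarrow> k < n \<Longrightarrow> fp g < a k" for g j k
      using ab by (auto simp: hom_def fp_def split: if_splits)
    show "\<forall>i<n. \<forall>j<n. \<forall>k<n. \<forall>f\<in>hom i j. \<forall>g\<in>hom j k. cmp i j k g f \<in> hom i k"
    proof (intro allI impI ballI)
      fix i j k f g assume "i<n" "j<n" "k<n" and f: "f \<in> hom i j" and g: "g \<in> hom j k"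
      show "cmp i j k g f \<in> hom i k"
      proof (cases "f = Id")
        case True then show ?thesis using idm_hom[of i j] f g by (simp add: cmp_def)
      next
        case fI: False
        show ?thesis
        proof (cases "g = Id")
          case True then show ?thesis using idm_hom[of j k] f g fI by (simp add: cmp_def)
        next
          case False
          then have "cmp i j k g f = Pr (fp g) (sp f)" using fI by (simp add: cmp_def)
          then show ?thesis using prm spb[OF f fI \<open>i<n\<close>] fpb[OF g False \<open>k<n\<close>] by simp
        qed
      qed
    qed
    show "\<forall>i<n. \<forall>j<n. \<forall>k<n. \<forall>l<n. \<forall>f\<in>hom i j. \<forall>g\<in>hom j k. \<forall>h\<in>hom k l.
        cmp i k l h (cmp i j k g f) = cmp i j l (cmp j k l h g) f"
      by (simp add: cmp_def fp_def sp_def)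
    have Tin: "\<exists>r. f = Pr 0 r" if "M j j = 1" "j<n" "f \<in> hom i j" for f i j
      using that T1 by (auto simp: hom_def c_def split: if_splits)
    have Tout: "\<exists>s. f = Pr s 0" if "M i i = 1" "i<n" "f \<in> hom i j" for f i j
      using that T1 by (auto simp: hom_def c_def split: if_splits)
    have Tnid: "f \<noteq> Id" if "M i i = 1" "f \<in> hom i j" for f i j
      using that by (auto simp: hom_def split: if_splits)
    show "\<forall>i<n. \<forall>j<n. \<forall>f\<in>hom i j. cmp i j j (idm j) f = f \<and> cmp i i j f (idm i) = f"
    proof (intro allI impI ballI conjI)
      fix i j f assume ij: "i<n" "j<n" and f: "f \<in> hom i j"
      show "cmp i j j (idm j) f = f"
      proof (cases "M j j = 1")
        case True
        then obtain r where "f = Pr 0 r" using Tin ij f by blast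
        then show ?thesis using True by (simp add: cmp_def idm_def fp_def sp_def)
      qed (simp add: cmp_def idm_def)
      show "cmp i i j f (idm i) = f"
      proof (cases "M i i = 1")
        case True
        then obtain s where "f = Pr s 0" using Tout ij f by blast
        then show ?thesis using True by (simp add: cmp_def idm_def fp_def sp_def)
      qed (simp add: cmp_def idm_def)
    qed
    show "\<forall>i<n. \<forall>j<n. finite (hom i j) \<and> card (hom i j) = M i j"
    proof (intro allI impI conjI)
      fix i j assume ij: "i<n" "j<n"
      show "finite (hom i j)" by (simp add: hom_def)
      have c1: "card ((\<lambda>(s,r). Pr s r) ` ({..<a j} \<times> {..<b i})) = a j * b i"
        by (subst card_image) (auto simp: inj_on_def)
      have c2: "card (Xm ` {..< c i j}) = c i j"
        by (subst card_image) (auto simp: inj_on_def)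
      have "card (hom i j) = card (if i = j \<and> M i i \<noteq> 1 then {Id} else {}) + a j * b i + c i j"
      proof -
        let ?I = "(if i = j \<and> M i i \<noteq> 1 then {Id} else {})"
        let ?P = "(\<lambda>(s,r). Pr s r) ` ({..<a j} \<times> {..<b i})"
        let ?X = "Xm ` {..< c i j}"
        have "card (?I \<union> ?P \<union> ?X) = card (?I \<union> ?P) + card ?X"
          by (rule card_Un_disjoint) auto
        moreover have "card (?I \<union> ?P) = card ?I + card ?P"
          by (rule card_Un_disjoint) auto
        ultimately show ?thesis unfolding hom_def using c1 c2 by simp
      qed
      then show "card (hom i j) = M i j"
      proof -
        assume cd: "card (hom i j) = card (if i = j \<and> M i i \<noteq> 1 then {Id} else {}) + a j * b i + c i j"
        show ?thesis
        proof (cases "M i i = 1 \<or> M j j = 1")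
          case True
          then have "M i j = a j * b i" using T2 ij by blast
          moreover have "c i j = 0" using True by (simp add: c_def)
          ultimately show ?thesis using cd True by auto
        next
          case False
          then have le: "a j * b i + (if i = j then 1 else 0) \<le> M i j" using U ij by blast
          have "c i j = M i j - a j * b i - (if i = j then 1 else 0)" using False by (simp add: c_def)
          then show ?thesis using cd False le by (cases "i = j") auto
        qed
      qed
    qed
  qed
qed



lemma nec:
  assumes C: "is_category m hom idm cmp"
    and H: "\<forall>i<m. \<forall>j<m. finite (hom i j) \<and> card (hom i j) = N i j"
    and P: "\<forall>i<m. \<forall>j<m. N i j \<ge> 1"
    and t: "t<m" and j: "j<m" and k: "k<m" and Tt: "N t t = 1"
  shows "(N j j = 1 \<longrightarrow> N j t = 1 \<and> N t j = 1 \<and> N j k = N t k \<and> N k j = N k t)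
     \<and> N t k * N j t \<le> N j k \<and> (N j j \<noteq> 1 \<longrightarrow> N t j * N j t + 1 \<le> N j j)"
proof -
  have ax: "(\<forall>i<m. idm i \<in> hom i i) \<and>
     (\<forall>i<m. \<forall>j<m. \<forall>k<m. \<forall>f\<in>hom i j. \<forall>g\<in>hom j k. cmp i j k g f \<in> hom i k) \<and>
     (\<forall>i<m. \<forall>j<m. \<forall>k<m. \<forall>l<m. \<forall>f\<in>hom i j. \<forall>g\<in>hom j k. \<forall>h\<in>hom k l.
        cmp i k l h (cmp i j k g f) = cmp i j l (cmp j k l h g) f) \<and>
     (\<forall>i<m. \<forall>j<m. \<forall>f\<in>hom i j. cmp i j j (idm j) f = f \<and> cmp i i j f (idm i) = f)"
    using C by (simp only: is_category_def)
  note idm_in = ax[THEN conjunct1, rule_format]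
  note cl = ax[THEN conjunct2, THEN conjunct1, rule_format]
  note as = ax[THEN conjunct2, THEN conjunct2, THEN conjunct1, rule_format]
  note lid = ax[THEN conjunct2, THEN conjunct2, THEN conjunct2, rule_format, THEN conjunct1]
  note rid = ax[THEN conjunct2, THEN conjunct2, THEN conjunct2, rule_format, THEN conjunct2]
  have fin: "\<And>i j. i<m \<Longrightarrow> j<m \<Longrightarrow> finite (hom i j)" using H by blast
  have cd: "\<And>i j. i<m \<Longrightarrow> j<m \<Longrightarrow> card (hom i j) = N i j" using H by blast
  have ne: "\<And>i j. i<m \<Longrightarrow> j<m \<Longrightarrow> \<exists>x. x \<in> hom i j"
  proof -
    fix i j assume "i<m" "j<m"
    then have "card (hom i j) \<ge> 1" using cd P by simp
    then show "\<exists>x. x \<in> hom i j" by (metis card.empty ex_in_conv not_one_le_zero)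
  qed
  have sing: "\<And>i x. i<m \<Longrightarrow> N i i = 1 \<Longrightarrow> x \<in> hom i i \<Longrightarrow> x = idm i"
  proof -
    fix i x assume "i<m" "N i i = 1" "x \<in> hom i i"
    then have "card (hom i i) \<le> Suc 0" "finite (hom i i)" using cd fin by auto
    then show "x = idm i" using card_le_Suc0_iff_eq idm_in \<open>i<m\<close> \<open>x \<in> hom i i\<close> by blast
  qed
  have RS: "\<And>j f g. j<m \<Longrightarrow> f \<in> hom t j \<Longrightarrow> g \<in> hom j t \<Longrightarrow> cmp t j t g f = idm t"
  proof -
    fix j f g assume "j<m" "f \<in> hom t j" "g \<in> hom j t"
    then have "cmp t j t g f \<in> hom t t" using cl t by blast
    then show "cmp t j t g f = idm t" by (rule sing[OF t Tt])
  qed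
  obtain s0 where s0: "s0 \<in> hom t j" using ne t j by blast
  obtain r0 where r0: "r0 \<in> hom k t" using ne t k by blast
  
  have C1: "N t k * N j t \<le> N j k"
  proof -
    have "card (hom t k \<times> hom j t) \<le> card (hom j k)"
    proof (rule card_le_linv[where F="\<lambda>(s,r). cmp j t k s r" and G="\<lambda>y. (cmp t j k y s0, cmp j k t r0 y)"])
      show "finite (hom j k)" using fin j k .
      fix x assume x: "x \<in> hom t k \<times> hom j t"
      then obtain s r where sr: "x = (s,r)" "s \<in> hom t k" "r \<in> hom j t" by blast
      show "(case x of (s,r) \<Rightarrow> cmp j t k s r) \<in> hom j k" using sr cl t j k by simp
      have "cmp t j k (cmp j t k s r) s0 = cmp t t k s (cmp t j t r s0)"
        using as[of t j t k s0 r s] sr s0 t j k by simp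
      also have "\<dots> = s" using RS[of j s0 r] rid[of t k s] sr s0 t j k by simp
      finally have e1: "cmp t j k (cmp j t k s r) s0 = s" .
      have "cmp j k t r0 (cmp j t k s r) = cmp j t t (cmp t k t r0 s) r"
        using as[of j t k t r s r0] sr r0 t j k by simp
      also have "\<dots> = r" using RS[of k s r0] lid[of j t r] sr r0 t j k by simp
      finally have e2: "cmp j k t r0 (cmp j t k s r) = r" .
      show "(\<lambda>y. (cmp t j k y s0, cmp j k t r0 y)) (case x of (s,r) \<Rightarrow> cmp j t k s r) = x"
        using e1 e2 sr by simp
    qed
    then show ?thesis using cd t j k fin by (simp add: card_cartesian_product)
  qed
  
  have D1: "N j j \<noteq> 1 \<longrightarrow> N t j * N j t + 1 \<le> N j j"
  proof
    assume nj: "N j j \<noteq> 1"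
    obtain r1 where r1: "r1 \<in> hom j t" using ne t j by blast
    have nid: "cmp j t j s r \<noteq> idm j" if sr: "s \<in> hom t j" "r \<in> hom j t" for s r
    proof
      assume e: "cmp j t j s r = idm j"
      have "hom j j \<subseteq> {idm j}"
      proof
        fix x assume x: "x \<in> hom j j"
        have xs: "cmp t j j x s \<in> hom t j" using cl x sr t j by blast
        have "cmp t j j x s = cmp t j j (idm j) (cmp t j j x s)" using lid xs t j by simp
        also have "\<dots> = cmp t j j (cmp j t j s r) (cmp t j j x s)" using e by simp
        also have "\<dots> = cmp t t j s (cmp t j t r (cmp t j j x s))"
          using as[of t j t j "cmp t j j x s" r s] xs sr t j by simp
        also have "\<dots> = s" using RS[of j "cmp t j j x s" r] rid[of t j s] xs sr t j by simp
        finally have xs2: "cmp t j j x s = s" .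
        have "x = cmp j j j x (idm j)" using rid x j by simp
        also have "\<dots> = cmp j j j x (cmp j t j s r)" using e by simp
        also have "\<dots> = cmp j t j (cmp t j j x s) r" using as[of j t j j r s x] x sr t j by simp
        also have "\<dots> = idm j" using xs2 e by simp
        finally show "x \<in> {idm j}" by simp
      qed
      then have "card (hom j j) \<le> card {idm j}" by (rule card_mono[rotated]) simp
      then have "card (hom j j) \<le> 1" by simp
      moreover have "N j j \<ge> 1" using P j by blast
      ultimately show False using cd[OF j j] nj by linarith
    qed
    have "card (hom t j \<times> hom j t) \<le> card (hom j j - {idm j})"
    proof (rule card_le_linv[where F="\<lambda>(s,r). cmp j t j s r" and G="\<lambda>y. (cmp t j j y s0, cmp j j t r1 y)"])
      show "finite (hom j j - {idm j})" using fin j by simp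
      fix x assume x: "x \<in> hom t j \<times> hom j t"
      then obtain s r where sr: "x = (s,r)" "s \<in> hom t j" "r \<in> hom j t" by blast
      show "(case x of (s,r) \<Rightarrow> cmp j t j s r) \<in> hom j j - {idm j}" using sr cl t j nid by simp
      have "cmp t j j (cmp j t j s r) s0 = cmp t t j s (cmp t j t r s0)"
        using as[of t j t j s0 r s] sr s0 t j by simp
      also have "\<dots> = s" using RS[of j s0 r] rid[of t j s] sr s0 t j by simp
      finally have e1: "cmp t j j (cmp j t j s r) s0 = s" .
      have "cmp j j t r1 (cmp j t j s r) = cmp j t t (cmp t j t r1 s) r"
        using as[of j t j t r s r1] sr r1 t j by simp
      also have "\<dots> = r" using RS[of j s r1] lid[of j t r] sr r1 t j by simp
      finally have e2: "cmp j j t r1 (cmp j t j s r) = r" .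
      show "(\<lambda>y. (cmp t j j y s0, cmp j j t r1 y)) (case x of (s,r) \<Rightarrow> cmp j t j s r) = x"
        using e1 e2 sr by simp
    qed
    moreover have "card (hom j j - {idm j}) = N j j - 1" using cd[OF j j] fin[OF j j] idm_in[OF j] by simp
    moreover have "N j j \<ge> 1" using P j by simp
    ultimately show "N t j * N j t + 1 \<le> N j j" using cd t j fin by (simp add: card_cartesian_product)
  qed
  
  have AB: "N j j = 1 \<longrightarrow> N j t = 1 \<and> N t j = 1 \<and> N j k = N t k \<and> N k j = N k t"
  proof
    assume Tj: "N j j = 1"
    obtain g0 where g0: "g0 \<in> hom j t" using ne t j by blast
    have FG: "cmp j t j f g = idm j" if "f \<in> hom t j" "g \<in> hom j t" for f g
    proof -
      have "cmp j t j f g \<in> hom j j" using cl that t j by blast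
      then show ?thesis by (rule sing[OF j Tj])
    qed
    have u1: "f = f'" if "f \<in> hom t j" "f' \<in> hom t j" for f f'
    proof -
      have "f = cmp t t j f (idm t)" using rid that t j by simp
      also have "\<dots> = cmp t t j f (cmp t j t g0 f')" using RS[of j f' g0] that g0 j by simp
      also have "\<dots> = cmp t j j (cmp j t j f g0) f'" using as[of t j t j f' g0 f] that g0 t j by simp
      also have "\<dots> = f'" using FG[of f g0] lid[of t j f'] that g0 t j by simp
      finally show ?thesis .
    qed
    have u2: "g = g'" if "g \<in> hom j t" "g' \<in> hom j t" for g g'
    proof -
      have "g = cmp j j t g (idm j)" using rid that t j by simp
      also have "\<dots> = cmp j j t g (cmp j t j s0 g')" using FG[of s0 g'] that s0 by simp
      also have "\<dots> = cmp j t t (cmp t j t g s0) g'" using as[of j t j t g' s0 g] that s0 t j by simp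
      also have "\<dots> = g'" using RS[of j s0 g] lid[of j t g'] that s0 t j by simp
      finally show ?thesis .
    qed
    have c1: "N t j = 1"
    proof -
      have "card (hom t j) \<le> Suc 0" using card_le_Suc0_iff_eq fin[OF t j] u1 by blast
      moreover have "N t j \<ge> 1" using P t j by blast
      ultimately show ?thesis using cd[OF t j] by linarith
    qed
    have c2: "N j t = 1"
    proof -
      have "card (hom j t) \<le> Suc 0" using card_le_Suc0_iff_eq fin[OF j t] u2 by blast
      moreover have "N j t \<ge> 1" using P t j by blast
      ultimately show ?thesis using cd[OF j t] by linarith
    qed
    have c3a: "card (hom j k) \<le> card (hom t k)"
    proof (rule card_le_linv[where F="\<lambda>x. cmp t j k x s0" and G="\<lambda>y. cmp j t k y g0"])
      show "finite (hom t k)" using fin t k .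
      fix x assume x: "x \<in> hom j k"
      show "cmp t j k x s0 \<in> hom t k" using cl x s0 t j k by blast
      have "x = cmp j j k x (idm j)" using rid x j k by simp
      also have "\<dots> = cmp j j k x (cmp j t j s0 g0)" using FG s0 g0 by simp
      also have "\<dots> = cmp j t k (cmp t j k x s0) g0" using as[of j t j k g0 s0 x] x s0 g0 t j k by simp
      finally show "cmp j t k (cmp t j k x s0) g0 = x" by simp
    qed
    have c3b: "card (hom t k) \<le> card (hom j k)"
    proof (rule card_le_linv[where F="\<lambda>x. cmp j t k x g0" and G="\<lambda>y. cmp t j k y s0"])
      show "finite (hom j k)" using fin j k .
      fix x assume x: "x \<in> hom t k"
      show "cmp j t k x g0 \<in> hom j k" using cl x g0 t j k by blast
      have "x = cmp t t k x (idm t)" using rid x t k by simp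
      also have "\<dots> = cmp t t k x (cmp t j t g0 s0)" using RS s0 g0 j by simp
      also have "\<dots> = cmp t j k (cmp j t k x g0) s0" using as[of t j t k s0 g0 x] x s0 g0 t j k by simp
      finally show "cmp t j k (cmp j t k x g0) s0 = x" by simp
    qed
    have c4a: "card (hom k j) \<le> card (hom k t)"
    proof (rule card_le_linv[where F="\<lambda>x. cmp k j t g0 x" and G="\<lambda>y. cmp k t j s0 y"])
      show "finite (hom k t)" using fin k t .
      fix x assume x: "x \<in> hom k j"
      show "cmp k j t g0 x \<in> hom k t" using cl x g0 t j k by blast
      have "x = cmp k j j (idm j) x" using lid x j k by simp
      also have "\<dots> = cmp k j j (cmp j t j s0 g0) x" using FG s0 g0 by simp
      also have "\<dots> = cmp k t j s0 (cmp k j t g0 x)" using as[of k j t j x g0 s0] x s0 g0 t j k by simp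
      finally show "cmp k t j s0 (cmp k j t g0 x) = x" by simp
    qed
    have c4b: "card (hom k t) \<le> card (hom k j)"
    proof (rule card_le_linv[where F="\<lambda>x. cmp k t j s0 x" and G="\<lambda>y. cmp k j t g0 y"])
      show "finite (hom k j)" using fin k j .
      fix x assume x: "x \<in> hom k t"
      show "cmp k t j s0 x \<in> hom k j" using cl x s0 t j k by blast
      have "x = cmp k t t (idm t) x" using lid x t k by simp
      also have "\<dots> = cmp k t t (cmp t j t g0 s0) x" using RS s0 g0 j by simp
      also have "\<dots> = cmp k j t g0 (cmp k t j s0 x)" using as[of k t j t x s0 g0] x s0 g0 t j k by simp
      finally show "cmp k j t g0 (cmp k t j s0 x) = x" by simp
    qed
    show "N j t = 1 \<and> N t j = 1 \<and> N j k = N t k \<and> N k j = N k t"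
    proof (intro conjI)
      show "N j t = 1" by (rule c2)
      show "N t j = 1" by (rule c1)
      show "N j k = N t k" using c3a c3b cd[OF j k] cd[OF t k] by simp
      show "N k j = N k t" using c4a c4b cd[OF k j] cd[OF k t] by simp
    qed
  qed
  show ?thesis using AB C1 D1 by blast
qed



lemma restrict:
  assumes "Cat_nonempty n M" and sig: "\<forall>s<m. \<sigma> s < n"
  shows "Cat_nonempty m (\<lambda>s u. M (\<sigma> s) (\<sigma> u))"
proof -
  obtain hom idm cmp where C: "is_category n hom idm cmp"
    and H: "\<forall>i<n. \<forall>j<n. finite (hom i j) \<and> card (hom i j) = M i j"
    using assms(1) unfolding Cat_nonempty_def by blast
  have ax: "(\<forall>i<n. idm i \<in> hom i i) \<and>
     (\<forall>i<n. \<forall>j<n. \<forall>k<n. \<forall>f\<in>hom i j. \<forall>g\<in>hom j k. cmp i j k g f \<in> hom i k) \<and>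
     (\<forall>i<n. \<forall>j<n. \<forall>k<n. \<forall>l<n. \<forall>f\<in>hom i j. \<forall>g\<in>hom j k. \<forall>h\<in>hom k l.
        cmp i k l h (cmp i j k g f) = cmp i j l (cmp j k l h g) f) \<and>
     (\<forall>i<n. \<forall>j<n. \<forall>f\<in>hom i j. cmp i j j (idm j) f = f \<and> cmp i i j f (idm i) = f)"
    using C by (simp only: is_category_def)
  note idm_in = ax[THEN conjunct1, rule_format]
  note cl = ax[THEN conjunct2, THEN conjunct1, rule_format]
  note as = ax[THEN conjunct2, THEN conjunct2, THEN conjunct1, rule_format]
  note lid = ax[THEN conjunct2, THEN conjunct2, THEN conjunct2, rule_format, THEN conjunct1]
  note rid = ax[THEN conjunct2, THEN conjunct2, THEN conjunct2, rule_format, THEN conjunct2]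
  have "is_category m (\<lambda>s u. hom (\<sigma> s) (\<sigma> u)) (\<lambda>s. idm (\<sigma> s)) (\<lambda>s u v. cmp (\<sigma> s) (\<sigma> u) (\<sigma> v))"
    unfolding is_category_def
  proof (intro conjI allI impI ballI)
    fix i assume "i<m" then show "idm (\<sigma> i) \<in> hom (\<sigma> i) (\<sigma> i)" using idm_in sig by blast
  next
    fix i j k f g assume "i<m" "j<m" "k<m" "f \<in> hom (\<sigma> i) (\<sigma> j)" "g \<in> hom (\<sigma> j) (\<sigma> k)"
    then show "cmp (\<sigma> i) (\<sigma> j) (\<sigma> k) g f \<in> hom (\<sigma> i) (\<sigma> k)" using cl sig by simp
  next
    fix i j k l f g h assume "i<m" "j<m" "k<m" "l<m" "f \<in> hom (\<sigma> i) (\<sigma> j)" "g \<in> hom (\<sigma> j) (\<sigma> k)"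
      "h \<in> hom (\<sigma> k) (\<sigma> l)"
    then show "cmp (\<sigma> i) (\<sigma> k) (\<sigma> l) h (cmp (\<sigma> i) (\<sigma> j) (\<sigma> k) g f) =
       cmp (\<sigma> i) (\<sigma> j) (\<sigma> l) (cmp (\<sigma> j) (\<sigma> k) (\<sigma> l) h g) f" using as sig by simp
  next
    fix i j f assume "i<m" "j<m" "f \<in> hom (\<sigma> i) (\<sigma> j)"
    then show "cmp (\<sigma> i) (\<sigma> j) (\<sigma> j) (idm (\<sigma> j)) f = f" using lid sig by simp
  next
    fix i j f assume "i<m" "j<m" "f \<in> hom (\<sigma> i) (\<sigma> j)"
    then show "cmp (\<sigma> i) (\<sigma> i) (\<sigma> j) f (idm (\<sigma> i)) = f" using rid sig by simp
  qed
  moreover have "\<forall>i<m. \<forall>j<m. finite (hom (\<sigma> i) (\<sigma> j)) \<and> card (hom (\<sigma> i) (\<sigma> j)) = M (\<sigma> i) (\<sigma> j)"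
    using H sig by simp
  ultimately show ?thesis unfolding Cat_nonempty_def by blast
qed

lemma sort3:
  fixes p q r :: nat
  assumes "p \<noteq> q" "q \<noteq> r" "p \<noteq> r"
  shows "\<exists>a b c. a < b \<and> b < c \<and> {p,q,r} = {a,b,c}"
proof -
  have "(p<q \<and> q<r) \<or> (p<r \<and> r<q) \<or> (q<p \<and> p<r) \<or> (q<r \<and> r<p) \<or> (r<p \<and> p<q) \<or> (r<q \<and> q<p)"
    using assms by arith
  then show ?thesis
  proof (elim disjE)
    assume "p<q \<and> q<r" then show ?thesis by blast
  next
    assume "p<r \<and> r<q" then show ?thesis by (intro exI[of _ p] exI[of _ r] exI[of _ q]) auto
  next
    assume "q<p \<and> p<r" then show ?thesis by (intro exI[of _ q] exI[of _ p] exI[of _ r]) auto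
  next
    assume "q<r \<and> r<p" then show ?thesis by (intro exI[of _ q] exI[of _ r] exI[of _ p]) auto
  next
    assume "r<p \<and> p<q" then show ?thesis by (intro exI[of _ r] exI[of _ p] exI[of _ q]) auto
  next
    assume "r<q \<and> q<p" then show ?thesis by (intro exI[of _ r] exI[of _ q] exI[of _ p]) auto
  qed
qed

lemma triple:
  fixes n x y z :: nat
  assumes "3 \<le> n" "x<n" "y<n" "z<n"
  shows "\<exists>a b c. a<b \<and> b<c \<and> c<n \<and> x \<in> {a,b,c} \<and> y \<in> {a,b,c} \<and> z \<in> {a,b,c}"
proof -
  have "card {x,y,z} \<le> 3" by (simp add: card_insert_le_m1)
  moreover have "3 \<le> card {..<n}" using assms by simp
  moreover have "{x,y,z} \<subseteq> {..<n}" using assms by auto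
  ultimately obtain B where B: "{x,y,z} \<subseteq> B" "B \<subseteq> {..<n}" "card B = 3"
    using exists_subset_between[of "{x,y,z}" 3 "{..<n}"] by auto
  then obtain p q r where pqr: "B = {p,q,r}" "p \<noteq> q" "q \<noteq> r" "p \<noteq> r"
    using card_3_iff by metis
  then obtain a b c where abc: "a < b" "b < c" "B = {a,b,c}" using sort3 by metis
  then show ?thesis using B by auto
qed

lemma idx3:
  assumes "x \<in> {a,b,c}" shows "\<exists>s<3. [a,b,c]!s = x"
proof -
  consider "x = a" | "x = b" | "x = c" using assms by blast
  then show ?thesis
  proof cases
    case 1 then show ?thesis by (intro exI[of _ 0]) simp
  next
    case 2 then show ?thesis by (intro exI[of _ 1]) simp
  next
    case 3 then show ?thesis by (intro exI[of _ 2]) simp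
  qed
qed

lemma nth3: "s < 3 \<Longrightarrow> [a,b,c]!s \<in> {a,b,c}"
  using nth_mem[of s "[a,b,c]"] by simp

lemma nec_M:
  fixes n :: nat and M :: "nat \<Rightarrow> nat \<Rightarrow> nat"
  assumes n: "n \<ge> 3"
    and pos: "\<forall>i<n. \<forall>j<n. M i j \<ge> 1"
    and H: "\<forall>a b c. a < b \<and> b < c \<and> c < n \<longrightarrow>
       Cat_nonempty 3 (\<lambda>s t. M ([a, b, c] ! s) ([a, b, c] ! t))"
    and t: "t<n" and j: "j<n" and k: "k<n" and Tt: "M t t = 1"
  shows "(M j j = 1 \<longrightarrow> M j t = 1 \<and> M t j = 1 \<and> M j k = M t k \<and> M k j = M k t)
     \<and> M t k * M j t \<le> M j k \<and> (M j j \<noteq> 1 \<longrightarrow> M t j * M j t + 1 \<le> M j j)"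
proof -
  obtain a b c where abc: "a<b" "b<c" "c<n" "t \<in> {a,b,c}" "j \<in> {a,b,c}" "k \<in> {a,b,c}"
    using triple[OF n t j k] by blast
  define N where "N s u = M ([a, b, c] ! s) ([a, b, c] ! u)" for s u
  have "Cat_nonempty 3 N" using H abc unfolding N_def by blast
  then obtain hom idm cmp where C: "is_category 3 hom idm cmp"
    and HH: "\<forall>i<3. \<forall>j<3. finite (hom i j) \<and> card (hom i j) = N i j"
    unfolding Cat_nonempty_def by blast
  have lt: "\<And>s. s<3 \<Longrightarrow> [a,b,c]!s < n"
  proof -
    fix s :: nat assume "s<3"
    then have "[a,b,c]!s \<in> {a,b,c}" by (rule nth3)
    then show "[a,b,c]!s < n" using abc by auto
  qed
  have P: "\<forall>i<3. \<forall>j<3. N i j \<ge> 1" using pos lt unfolding N_def by blast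
  obtain st where st: "st<3" "[a,b,c]!st = t" using idx3[OF abc(4)] by blast
  obtain sj where sj: "sj<3" "[a,b,c]!sj = j" using idx3[OF abc(5)] by blast
  obtain sk where sk: "sk<3" "[a,b,c]!sk = k" using idx3[OF abc(6)] by blast
  have "N st st = 1" using Tt st unfolding N_def by simp
  from nec[OF C HH P st(1) sj(1) sk(1) this]
  show ?thesis using st sj sk unfolding N_def by simp
qed



theorem mainTheorem9:
  fixes n :: nat and M :: "nat \<Rightarrow> nat \<Rightarrow> nat"
  assumes "n \<ge> 3"
    and "\<forall>i<n. \<forall>j<n. M i j \<ge> 1"
  shows "Cat_nonempty n M \<longleftrightarrow>
    (\<forall>a b c. a < b \<and> b < c \<and> c < n \<longrightarrow>
       Cat_nonempty 3 (\<lambda>s t. M ([a, b, c] ! s) ([a, b, c] ! t)))"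
proof
  assume CM: "Cat_nonempty n M"
  show "\<forall>a b c. a < b \<and> b < c \<and> c < n \<longrightarrow>
       Cat_nonempty 3 (\<lambda>s t. M ([a, b, c] ! s) ([a, b, c] ! t))"
  proof (intro allI impI)
    fix a b c assume abc: "a < b \<and> b < c \<and> c < n"
    have "\<forall>s<3. [a,b,c]!s < n"
    proof (intro allI impI)
      fix s :: nat assume "s<3"
      then have "[a,b,c]!s \<in> {a,b,c}" by (rule nth3)
      then show "[a,b,c]!s < n" using abc by auto
    qed
    then show "Cat_nonempty 3 (\<lambda>s t. M ([a, b, c] ! s) ([a, b, c] ! t))"
      using restrict[OF CM, of 3 "\<lambda>s. [a,b,c]!s"] by simp
  qed
next
  assume H: "\<forall>a b c. a < b \<and> b < c \<and> c < n \<longrightarrow>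
       Cat_nonempty 3 (\<lambda>s t. M ([a, b, c] ! s) ([a, b, c] ! t))"
  show "Cat_nonempty n M"
  proof (cases "\<exists>t<n. M t t = 1")
    case True
    then obtain t where t: "t<n" "M t t = 1" by blast
    note nm = nec_M[OF assms(1) assms(2) H t(1) _ _ t(2)]
    show ?thesis
    proof (rule construction[where a = "\<lambda>k. M t k" and b = "\<lambda>j. M j t"])
      show "\<forall>k<n. 1 \<le> M t k \<and> 1 \<le> M k t" using assms(2) t by blast
      show "\<forall>j<n. M j j = 1 \<longrightarrow> M t j = 1 \<and> M j t = 1" using nm by blast
      show "\<forall>j<n. \<forall>k<n. M j j = 1 \<or> M k k = 1 \<longrightarrow> M j k = M t k * M j t"
      proof (intro allI impI)
        fix j k assume jk: "j<n" "k<n" and T: "M j j = 1 \<or> M k k = 1"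
        show "M j k = M t k * M j t"
        proof (cases "M j j = 1")
          case True
          then show ?thesis using nm[OF jk(1) jk(2)] by simp
        next
          case False
          then have "M k k = 1" using T by blast
          then show ?thesis using nm[OF jk(2) jk(1)] by simp
        qed
      qed
      show "\<forall>j<n. \<forall>k<n. M j j \<noteq> 1 \<and> M k k \<noteq> 1 \<longrightarrow> M t k * M j t + (if j = k then 1 else 0) \<le> M j k"
      proof (intro allI impI)
        fix j k assume jk: "j<n" "k<n" and U: "M j j \<noteq> 1 \<and> M k k \<noteq> 1"
        show "M t k * M j t + (if j = k then 1 else 0) \<le> M j k"
        proof (cases "j = k")
          case True
          then show ?thesis using nm[OF jk(1) jk(2)] U by simp
        next
          case False
          then show ?thesis using nm[OF jk(1) jk(2)] by simp
        qed
      qed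
    qed
  next
    case False
    show ?thesis
    proof (rule construction[where a = "\<lambda>k. 1" and b = "\<lambda>j. 1"])
      show "\<forall>k<n. (1::nat) \<le> 1 \<and> (1::nat) \<le> 1" by simp
      show "\<forall>j<n. M j j = 1 \<longrightarrow> (1::nat) = 1 \<and> (1::nat) = 1" by simp
      show "\<forall>j<n. \<forall>k<n. M j j = 1 \<or> M k k = 1 \<longrightarrow> M j k = 1 * 1" using False by blast
      show "\<forall>j<n. \<forall>k<n. M j j \<noteq> 1 \<and> M k k \<noteq> 1 \<longrightarrow> 1 * 1 + (if j = k then 1 else 0) \<le> M j k"
      proof (intro allI impI)
        fix j k assume jk: "j<n" "k<n" and U: "M j j \<noteq> 1 \<and> M k k \<noteq> 1"
        have "M j k \<ge> 1" using assms(2) jk by blast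
        then show "1 * 1 + (if j = k then 1 else 0) \<le> M j k" using U by (cases "j = k") auto
      qed
    qed
  qed
qed


end
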